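(* A lower transition rate operator $\underline{Q}$ is ergodic if and only if \begin{equation*} \mathcal{X}_{\mathrm{1A}}\coloneqq \{ x\in\mathcal{X}\colon (\forall y\in\mathcal{X})~x\text{ is upper reachable from }y \}\neq\emptyset \end{equation*} and \begin{equation*} (\forall x\in\mathcal{X}\setminus\mathcal{X}_{\mathrm{1A}})~~\mathcal{X}_{\mathrm{1A}}\text{ is lower reachable from }x. \end{equation*}
   Context: $\mathcal{X}$ is a finite state space and $\mathcal{L}(\mathcal{X})$ is the set of real-valued functions on $\mathcal{X}$; $\mathbb{I}_S$ denotes the indicator of $S\subseteq\mathcal{X}$ (and $\mathbb{I}_x\coloneqq\mathbb{I}_{\{x\}}$), and $\mathbb{N}_0\coloneqq\mathbb{N}\cup\{0\}$. A lower transition rate operator is a map $\underline{Q}\colon\mathcal{L}(\mathcal{X})\to\mathcal{L}(\mathcal{X})$ such that for all $f,g\in\mathcal{L}(\mathcal{X})$, $\lambda\geq0$, $\mu\in\mathbb{R}$ and $x,y\in\mathcal{X}$: $\underline{Q}(\mu)=0$; $\underline{Q}(f+g)\geq\underline{Q}(f)+\underline{Q}(g)$; $\underline{Q}(\lambda f)=\lambda\underline{Q}(f)$; and $x\neq y\Rightarrow\underline{Q}(\mathbb{I}_y)(x)\geq0$. Its conjugate is $\overline{Q}f\coloneqq-\underline{Q}(-f)$. For each $t\geq0$, $\underline{T}_t$ is the map on $\mathcal{L}(\mathcal{X})$ defined for every $f$ by the (uniquely solvable) differential equation $\frac{d}{dt}\underline{T}_tf=\underline{Q}\,\underline{T}_tf$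 for all $t\geq0$ with $\underline{T}_0f=f$. $\underline{Q}$ is called ergodic if for every $f\in\mathcal{L}(\mathcal{X})$, $\lim_{t\to\infty}\underline{T}_tf$ exists and is a constant function. Upper reachability: for $x,y\in\mathcal{X}$, $x$ is upper reachable from $y$ if there is a sequence $y=x_0,\dots,x_n=x$ with, for all $k\in\{1,\dots,n\}$, $x_k\neq x_{k-1}$ and $\overline{Q}(\mathbb{I}_{x_k})(x_{k-1})>0$. Lower reachability: for $x\in\mathcal{X}$ and $A\subseteq\mathcal{X}$, $A$ is lower reachable from $x$ if $x\in A_n$, where $A_0\coloneqq A$, $A_{k+1}\coloneqq A_k\cup\{y\in\mathcal{X}\setminus A_k\colon\underline{Q}(\mathbb{I}_{A_k})(y)>0\}$ for $k\in\mathbb{N}_0$, and $n$ is the first index with $A_n=A_{n+1}$. *)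

theory Defs
  imports "HOL-Analysis.Analysis"
begin

definition lower_trans_rate_op :: "(('x \<Rightarrow> real) \<Rightarrow> ('x \<Rightarrow> real)) \<Rightarrow> bool" where
  "lower_trans_rate_op Q \<longleftrightarrow>
     (\<forall>\<mu>::real. Q (\<lambda>_. \<mu>) = (\<lambda>_. 0)) \<and>
     (\<forall>f g x. Q (\<lambda>y. f y + g y) x \<ge> Q f x + Q g x) \<and>
     (\<forall>(l::real)\<ge>0. \<forall>f. Q (\<lambda>y. l * f y) = (\<lambda>x. l * Q f x)) \<and>
     (\<forall>x y. x \<noteq> y \<longrightarrow> Q (indicator {y}) x \<ge> 0)"

definition upper_op :: "(('x \<Rightarrow> real) \<Rightarrow> ('x \<Rightarrow> real)) \<Rightarrow> ('x \<Rightarrow> real) \<Rightarrow> ('x \<Rightarrow> real)" where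
  "upper_op Q f = (\<lambda>x. - Q (\<lambda>y. - f y) x)"

text \<open>The derivative is taken componentwise (the state space is finite), one-sided at t = 0.
  To make the solution a unique total function we extend it constantly (= f) to t < 0.\<close>
definition lower_T :: "(('x \<Rightarrow> real) \<Rightarrow> ('x \<Rightarrow> real)) \<Rightarrow> real \<Rightarrow> ('x \<Rightarrow> real) \<Rightarrow> ('x \<Rightarrow> real)" where
  "lower_T Q t f = (THE g. g 0 = f \<and> (\<forall>r<0. g r = f) \<and>
      (\<forall>s\<ge>0. \<forall>x. ((\<lambda>r. g r x) has_real_derivative Q (g s) x) (at s within {0..}))) t"

definition ergodic :: "(('x \<Rightarrow> real) \<Rightarrow> ('x \<Rightarrow> real)) \<Rightarrow> bool" where
  "ergodic Q \<longleftrightarrow> (\<forall>f. \<exists>c::real. ((\<lambda>t. lower_T Q t f) \<longlongrightarrow> (\<lambda>_. c)) at_top)"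

definition upper_reachable :: "(('x \<Rightarrow> real) \<Rightarrow> ('x \<Rightarrow> real)) \<Rightarrow> 'x \<Rightarrow> 'x \<Rightarrow> bool" where
  "upper_reachable Q x y \<longleftrightarrow> (\<exists>xs. xs \<noteq> [] \<and> hd xs = y \<and> last xs = x \<and>
     (\<forall>k. Suc k < length xs \<longrightarrow>
        xs ! Suc k \<noteq> xs ! k \<and> upper_op Q (indicator {xs ! Suc k}) (xs ! k) > 0))"
text \<open>upper_reachable Q x y: x is upper reachable from y.\<close>

fun lower_seq :: "(('x \<Rightarrow> real) \<Rightarrow> ('x \<Rightarrow> real)) \<Rightarrow> 'x set \<Rightarrow> nat \<Rightarrow> 'x set" where
  "lower_seq Q A 0 = A"
| "lower_seq Q A (Suc k) = lower_seq Q A k \<union>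
     {y. y \<notin> lower_seq Q A k \<and> Q (indicator (lower_seq Q A k)) y > 0}"

definition lower_reachable :: "(('x \<Rightarrow> real) \<Rightarrow> ('x \<Rightarrow> real)) \<Rightarrow> 'x set \<Rightarrow> 'x \<Rightarrow> bool" where
  "lower_reachable Q A x \<longleftrightarrow>
     x \<in> lower_seq Q A (LEAST n. lower_seq Q A n = lower_seq Q A (Suc n))"
text \<open>lower_reachable Q A x: A is lower reachable from x.\<close>

definition X1A :: "(('x \<Rightarrow> real) \<Rightarrow> ('x \<Rightarrow> real)) \<Rightarrow> 'x set" where
  "X1A Q = {x. \<forall>y. upper_reachable Q x y}"

end

theory Submission
  imports Defs
begin


context
  fixes Q :: "('x::finite \<Rightarrow> real) \<Rightarrow> ('x \<Rightarrow> real)"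
  assumes LQ: "lower_trans_rate_op Q"
begin

lemma Q_const: "Q (\<lambda>_. c) = (\<lambda>_. 0)"
  using LQ unfolding lower_trans_rate_op_def by blast

lemma Q_super: fixes f g :: "'x \<Rightarrow> real" and x shows "Q (\<lambda>y. f y + g y) x \<ge> Q f x + Q g x"
  using LQ unfolding lower_trans_rate_op_def by blast

lemma Q_hom: fixes l :: real and f x shows "l \<ge> 0 \<Longrightarrow> Q (\<lambda>y. l * f y) x = l * Q f x"
  using LQ unfolding lower_trans_rate_op_def by metis

lemma Q_off: fixes x y shows "x \<noteq> y \<Longrightarrow> Q (indicator {y}) x \<ge> 0"
  using LQ unfolding lower_trans_rate_op_def by blast

lemma Q_zero: "Q (\<lambda>_. 0) x = 0"
  using Q_const[of 0] by metis

lemma Q_add_const: "Q (\<lambda>y. f y + c) = Q f"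
proof
  fix x
  have "Q (\<lambda>y. f y + c) x \<ge> Q f x + Q (\<lambda>_. c) x" using Q_super by blast
  moreover have "Q (\<lambda>y. (f y + c) + (-c)) x \<ge> Q (\<lambda>y. f y + c) x + Q (\<lambda>_. -c) x"
    using Q_super[where f="\<lambda>y. f y + c" and g="\<lambda>_. -c"] by simp
  ultimately show "Q (\<lambda>y. f y + c) x = Q f x" by (simp add: Q_const)
qed

lemma Q_sum: "finite S \<Longrightarrow> Q (\<lambda>z. \<Sum>y\<in>S. g y z) x \<ge> (\<Sum>y\<in>S. Q (g y) x)"
proof (induction S rule: finite_induct)
  case empty then show ?case by (simp add: Q_zero)
next
  case (insert a S)
  have "Q (\<lambda>z. g a z + (\<Sum>y\<in>S. g y z)) x \<ge> Q (g a) x + Q (\<lambda>z. \<Sum>y\<in>S. g y z) x"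
    using Q_super[where f="g a" and g="\<lambda>z. \<Sum>y\<in>S. g y z"] by simp
  with insert show ?case by simp
qed

lemma fun_decomp: "(\<lambda>z. \<Sum>y\<in>UNIV. d y * indicator {y} z) = (d :: 'x \<Rightarrow> real)"
proof
  fix z
  have "(\<Sum>y\<in>UNIV. d y * indicator {y} z) = (\<Sum>y\<in>{z}. d y * indicator {y} z)"
    by (rule sum.mono_neutral_right) auto
  then show "(\<Sum>y\<in>UNIV. d y * indicator {y} z) = d z" by simp
qed

lemma Q_decomp: fixes d :: "'x \<Rightarrow> real" and x shows "Q d x \<ge> (\<Sum>y\<in>UNIV. Q (\<lambda>z. d y * indicator {y} z) x)"
  using Q_sum[of UNIV "\<lambda>y z. d y * indicator {y} z" x] by (simp add: fun_decomp)

definition KQ :: real where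
  "KQ = (\<Sum>x\<in>UNIV. \<Sum>y\<in>UNIV. \<bar>Q (indicator {y}) x\<bar> + \<bar>Q (\<lambda>z. - indicator {y} z) x\<bar>)"

lemma KQ_ge: fixes y x shows "\<bar>Q (indicator {y}) x\<bar> + \<bar>Q (\<lambda>z. - indicator {y} z) x\<bar> \<le> KQ"
proof -
  have "\<bar>Q (indicator {y}) x\<bar> + \<bar>Q (\<lambda>z. - indicator {y} z) x\<bar>
     \<le> (\<Sum>y\<in>UNIV. \<bar>Q (indicator {y}) x\<bar> + \<bar>Q (\<lambda>z. - indicator {y} z) x\<bar>)"
    by (rule member_le_sum) auto
  also have "\<dots> \<le> KQ" unfolding KQ_def
    by (rule member_le_sum[where f="\<lambda>x. \<Sum>y\<in>UNIV. \<bar>Q (indicator {y}) x\<bar> + \<bar>Q (\<lambda>z. - indicator {y} z) x\<bar>"])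
       (auto intro: sum_nonneg)
  finally show ?thesis .
qed

lemma KQ_nonneg: "KQ \<ge> 0"
  unfolding KQ_def by (auto intro!: sum_nonneg)

lemma Q_scale_ind: fixes c :: real and y x shows "Q (\<lambda>z. c * indicator {y} z) x \<ge> - \<bar>c\<bar> * KQ"
proof (cases "c \<ge> 0")
  case True
  have "Q (\<lambda>z. c * indicator {y} z) x = c * Q (indicator {y}) x"
    using Q_hom[OF True, of "indicator {y}"] by simp
  moreover have "- \<bar>Q (indicator {y}) x\<bar> \<ge> - KQ" using KQ_ge[of y x] by simp
  moreover have "c * Q (indicator {y}) x \<ge> c * (- KQ)"
    using True KQ_ge[of y x] by (intro mult_left_mono) auto
  ultimately show ?thesis using True by simp
next
  case False
  have e: "(\<lambda>z. c * indicator {y} z) = (\<lambda>z. (-c) * (- indicator {y} z))" by auto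
  have "Q (\<lambda>z. c * indicator {y} z) x = (-c) * Q (\<lambda>z. - indicator {y} z) x"
    unfolding e using Q_hom[of "-c" "\<lambda>z. - indicator {y} z"] False by simp
  moreover have "- \<bar>Q (\<lambda>z. - indicator {y} z) x\<bar> \<ge> - KQ" using KQ_ge[of y x] by simp
  moreover have "(-c) * Q (\<lambda>z. - indicator {y} z) x \<ge> (-c) * (- KQ)"
    using False KQ_ge[of y x] by (intro mult_left_mono) auto
  ultimately show ?thesis using False by simp
qed

lemma Q_lower: fixes d :: "'x \<Rightarrow> real" and x shows "Q d x \<ge> - KQ * (\<Sum>y\<in>UNIV. \<bar>d y\<bar>)"
proof -
  have "(\<Sum>y\<in>UNIV. Q (\<lambda>z. d y * indicator {y} z) x) \<ge> (\<Sum>y\<in>UNIV. - \<bar>d y\<bar> * KQ)"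
    by (rule sum_mono) (rule Q_scale_ind)
  moreover have "(\<Sum>y\<in>UNIV. - \<bar>d y\<bar> * KQ) = - KQ * (\<Sum>y\<in>UNIV. \<bar>d y\<bar>)"
    by (simp add: sum_distrib_left sum_negf mult.commute)
  ultimately show ?thesis using Q_decomp[of d x] by linarith
qed

lemma Q_lip: fixes a b :: "'x \<Rightarrow> real" and x shows "\<bar>Q a x - Q b x\<bar> \<le> KQ * (\<Sum>y\<in>UNIV. \<bar>a y - b y\<bar>)"
proof -
  have 1: "Q a x \<ge> Q b x + Q (\<lambda>y. a y - b y) x"
    using Q_super[where f=b and g="\<lambda>y. a y - b y"] by simp
  have 2: "Q b x \<ge> Q a x + Q (\<lambda>y. b y - a y) x"
    using Q_super[where f=a and g="\<lambda>y. b y - a y"] by simp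
  have 3: "Q (\<lambda>y. a y - b y) x \<ge> - KQ * (\<Sum>y\<in>UNIV. \<bar>a y - b y\<bar>)" by (rule Q_lower)
  have 4: "Q (\<lambda>y. b y - a y) x \<ge> - KQ * (\<Sum>y\<in>UNIV. \<bar>a y - b y\<bar>)"
    using Q_lower[of "\<lambda>y. b y - a y" x] by (simp add: abs_minus_commute)
  show ?thesis using 1 2 3 4 by linarith
qed

lemma Q_pos_at: "(\<And>y. h y \<ge> 0) \<Longrightarrow> h x = 0 \<Longrightarrow> Q h x \<ge> 0"
proof -
  assume h: "\<And>y. h y \<ge> 0" "h x = 0"
  have "(\<Sum>y\<in>UNIV. Q (\<lambda>z. h y * indicator {y} z) x) \<ge> 0"
  proof (rule sum_nonneg)
    fix y
    show "Q (\<lambda>z. h y * indicator {y} z) x \<ge> 0"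
    proof (cases "y = x")
      case True then show ?thesis using h by (simp add: Q_zero)
    next
      case False
      then show ?thesis using Q_hom[of "h y" "indicator {y}" x] Q_off[of x y] h(1)[of y] by simp
    qed
  qed
  then show ?thesis using Q_decomp[of h x] by linarith
qed

lemma Q_max_mono:
  assumes "\<And>y. a y - b y \<le> a x - b x"
  shows "Q a x \<le> Q b x"
proof -
  have 1: "Q b x \<ge> Q a x + Q (\<lambda>y. b y - a y) x"
    using Q_super[where f=a and g="\<lambda>y. b y - a y"] by simp
  have "Q (\<lambda>y. b y - a y) x = Q (\<lambda>y. (b y - a y) + (a x - b x)) x"
    by (simp add: Q_add_const)
  also have "\<dots> \<ge> 0" by (rule Q_pos_at) (use assms in \<open>auto simp: algebra_simps\<close>)
  finally show ?thesis using 1 by linarith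
qed

end


lemma finite_argmax:
  fixes g :: "'x::finite \<Rightarrow> real"
  obtains x where "\<And>y. g y \<le> g x"
proof -
  have "Max (range g) \<in> range g" by (rule Max_in) auto
  then obtain x where "g x = Max (range g)" by (metis rangeE)
  moreover have "\<And>y. g y \<le> Max (range g)" by (rule Max_ge) auto
  ultimately show ?thesis using that by metis
qed

lemma finite_argmin:
  fixes g :: "'x::finite \<Rightarrow> real"
  obtains x where "\<And>y. g x \<le> g y"
proof -
  obtain x where "\<And>y. - g y \<le> - g x" using finite_argmax[of "\<lambda>y. - g y"] by blast
  then show ?thesis using that by force
qed

lemma deriv_cont_on:
  assumes "\<And>t. t \<ge> 0 \<Longrightarrow> (f has_real_derivative D t) (at t within {0..})"
  shows "continuous_on {0..} f"
  using assms by (auto simp: continuous_on_eq_continuous_within intro: DERIV_continuous)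

context
  fixes Q :: "('x::finite \<Rightarrow> real) \<Rightarrow> ('x \<Rightarrow> real)"
  assumes LQ: "lower_trans_rate_op Q"
begin

lemma comparison_eps:
  fixes u v du dv :: "real \<Rightarrow> 'x \<Rightarrow> real"
  assumes du: "\<And>t x. t \<ge> 0 \<Longrightarrow> ((\<lambda>r. u r x) has_real_derivative du t x) (at t within {0..})"
    and dv: "\<And>t x. t \<ge> 0 \<Longrightarrow> ((\<lambda>r. v r x) has_real_derivative dv t x) (at t within {0..})"
    and subu: "\<And>t x. t \<ge> 0 \<Longrightarrow> du t x \<le> Q (u t) x"
    and supv: "\<And>t x. t \<ge> 0 \<Longrightarrow> dv t x \<ge> Q (v t) x"
    and init: "\<And>x. u 0 x \<le> v 0 x"
    and t0: "t0 \<ge> 0" and eps: "\<epsilon> > 0"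
  shows "u t0 x0 - v t0 x0 < \<epsilon> * (1 + t0)"
proof (rule ccontr)
  assume neg0: "\<not> ?thesis"
  define w where "w r y = u r y - v r y - \<epsilon> * (1 + r)" for r y
  have dw: "((\<lambda>r. w r y) has_real_derivative (du t y - dv t y - \<epsilon>)) (at t within {0..})"
    if "t \<ge> 0" for t y
    unfolding w_def using du[OF that, of y] dv[OF that, of y]
    by (auto intro!: derivative_eq_intros)
  have cw: "continuous_on {0..t0} (\<lambda>r. w r y)" for y
    using deriv_cont_on[of "\<lambda>r. w r y", OF dw] by (rule continuous_on_subset) auto
  define S where "S = (\<Union>y. {0..t0} \<inter> (\<lambda>r. w r y) -` {0..})"
  have clS: "closed S" unfolding S_def
    by (intro closed_Union) (auto intro!: continuous_closed_preimage cw)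
  have t0S: "t0 \<in> S" unfolding S_def w_def using neg0 t0 by (auto intro!: exI[of _ x0])
  define ts where "ts = Inf S"
  have tsS: "ts \<in> S" unfolding ts_def
  proof (rule closed_contains_Inf)
    show "S \<noteq> {}" using t0S by blast
    show "bdd_below S" unfolding S_def by (rule bdd_belowI[of _ 0]) auto
  qed (rule clS)
  then obtain y0 where y0: "w ts y0 \<ge> 0" and ts0: "0 \<le> ts" "ts \<le> t0" unfolding S_def by auto
  have below: "w r y < 0" if "0 \<le> r" "r < ts" for r y
  proof (rule ccontr)
    assume "\<not> w r y < 0"
    then have "r \<in> S" unfolding S_def using that ts0 by (auto intro!: exI[of _ y])
    then have "ts \<le> r" unfolding ts_def by (rule cInf_lower) (auto simp: S_def)
    with that show False by simp
  qed
  have "ts \<noteq> 0"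
  proof
    assume "ts = 0"
    then have "w 0 y0 \<ge> 0" using y0 by simp
    moreover have "w 0 y0 < 0" unfolding w_def using init[of y0] eps by simp
    ultimately show False by simp
  qed
  with ts0 have tspos: "ts > 0" by simp
  obtain x where xmax: "\<And>y. w ts y \<le> w ts x" using finite_argmax[of "w ts"] by blast
  have wx: "w ts x \<ge> 0" using xmax[of y0] y0 by simp
  have "\<And>y. u ts y - v ts y \<le> u ts x - v ts x" using xmax unfolding w_def by smt
  then have "Q (u ts) x \<le> Q (v ts) x" by (rule Q_max_mono[OF LQ])
  then have neg: "du ts x - dv ts x - \<epsilon> < 0" using subu[of ts x] supv[of ts x] ts0 eps by simp
  obtain d where d: "d > 0" "\<forall>h>0. ts - h \<in> {0..} \<longrightarrow> h < d \<longrightarrow> w ts x < w (ts - h) x"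
    using has_real_derivative_neg_dec_left[OF dw[OF ts0(1)] neg] by blast
  define h where "h = min (d/2) ts"
  have "h > 0" "ts - h \<ge> 0" "h < d" using d tspos unfolding h_def by auto
  then have "w ts x < w (ts - h) x" using d by auto
  moreover have "w (ts - h) x < 0" using below[of "ts - h" x] \<open>h > 0\<close> \<open>ts - h \<ge> 0\<close> by simp
  ultimately show False using wx by simp
qed

lemma comparison:
  fixes u v du dv :: "real \<Rightarrow> 'x \<Rightarrow> real"
  assumes du: "\<And>t x. t \<ge> 0 \<Longrightarrow> ((\<lambda>r. u r x) has_real_derivative du t x) (at t within {0..})"
    and dv: "\<And>t x. t \<ge> 0 \<Longrightarrow> ((\<lambda>r. v r x) has_real_derivative dv t x) (at t within {0..})"
    and subu: "\<And>t x. t \<ge> 0 \<Longrightarrow> du t x \<le> Q (u t) x"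
    and supv: "\<And>t x. t \<ge> 0 \<Longrightarrow> dv t x \<ge> Q (v t) x"
    and init: "\<And>x. u 0 x \<le> v 0 x"
    and t0: "t0 \<ge> 0"
  shows "u t0 x0 \<le> v t0 x0"
proof (rule field_le_epsilon)
  fix e :: real assume "e > 0"
  have "u t0 x0 - v t0 x0 < (e / (1 + t0)) * (1 + t0)"
    by (rule comparison_eps[OF du dv subu supv init t0]) (use \<open>e > 0\<close> t0 in auto)
  then show "u t0 x0 \<le> v t0 x0 + e" using t0 by simp
qed

end


primrec pic :: "(('x \<Rightarrow> real) \<Rightarrow> ('x \<Rightarrow> real)) \<Rightarrow> ('x \<Rightarrow> real) \<Rightarrow> nat \<Rightarrow> real \<Rightarrow> 'x \<Rightarrow> real" where
  "pic Q f 0 = (\<lambda>t. f)"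
| "pic Q f (Suc n) = (\<lambda>t y. f y + integral {0..t} (\<lambda>s. Q (pic Q f n s) y))"

declare pic.simps[simp del]

lemma pic_Suc_app: "pic Q f (Suc n) t y = f y + integral {0..t} (\<lambda>s. Q (pic Q f n s) y)"
  by (simp add: pic.simps)

lemma pic_0_app: "pic Q f 0 t y = f y"
  by (simp add: pic.simps)

lemma int_pow: "(t::real) \<ge> 0 \<Longrightarrow> ((\<lambda>s. s ^ k) has_integral (t ^ Suc k / Suc k)) {0..t}"
proof -
  assume t: "t \<ge> 0"
  have "((\<lambda>s. s ^ k) has_integral ((\<lambda>s. s ^ Suc k / Suc k) t - (\<lambda>s. s ^ Suc k / Suc k) 0)) {0..t}"
  proof (rule fundamental_theorem_of_calculus[OF t])
    fix x :: real
    have "((\<lambda>s. s ^ Suc k / Suc k) has_real_derivative (real (Suc k) * x ^ (Suc k - Suc 0)) / Suc k) (at x within {0..t})"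
      by (rule DERIV_cdivide[OF DERIV_pow])
    then have "((\<lambda>s. s ^ Suc k / Suc k) has_real_derivative x ^ k) (at x within {0..t})"
      by (simp del: of_nat_Suc)
    then show "((\<lambda>s. s ^ Suc k / Suc k) has_vector_derivative x ^ k) (at x within {0..t})"
      by (simp add: has_real_derivative_iff_has_vector_derivative)
  qed
  then show ?thesis by simp
qed

context
  fixes Q :: "('x::finite \<Rightarrow> real) \<Rightarrow> ('x \<Rightarrow> real)"
  assumes LQ: "lower_trans_rate_op Q"
begin

lemma contQ:
  assumes "\<And>z. continuous_on S (\<lambda>s. g s z)"
  shows "continuous_on S (\<lambda>s. Q (g s) x)"
  unfolding continuous_on_def
proof
  fix s0 assume s0: "s0 \<in> S"
  have "((\<lambda>s. g s z) \<longlongrightarrow> g s0 z) (at s0 within S)" for z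
    using assms[of z] s0 unfolding continuous_on_def by blast
  then have "((\<lambda>s. \<Sum>z\<in>UNIV. \<bar>g s z - g s0 z\<bar>) \<longlongrightarrow> (\<Sum>z\<in>UNIV. \<bar>g s0 z - g s0 z\<bar>)) (at s0 within S)"
    by (intro tendsto_intros)
  then have "((\<lambda>s. KQ Q * (\<Sum>z\<in>UNIV. \<bar>g s z - g s0 z\<bar>)) \<longlongrightarrow> 0) (at s0 within S)"
    using tendsto_mult_left[of _ 0 _ "KQ Q"] by fastforce
  then have "((\<lambda>s. Q (g s) x - Q (g s0) x) \<longlongrightarrow> 0) (at s0 within S)"
    by (rule Lim_null_comparison[rotated]) (auto intro!: always_eventually Q_lip[OF LQ])
  then show "((\<lambda>s. Q (g s) x) \<longlongrightarrow> Q (g s0) x) (at s0 within S)"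
    by (rule LIM_zero_cancel)
qed

lemma pic_cont: "continuous_on {0..b} (\<lambda>s. pic Q f n s y)"
proof (induction n arbitrary: y)
  case 0 then show ?case by (simp add: pic.simps)
next
  case (Suc n)
  have "continuous_on {0..b} (\<lambda>s. Q (pic Q f n s) y)" by (rule contQ) (rule Suc.IH)
  then have "continuous_on {0..b} (\<lambda>t. integral {0..t} (\<lambda>s. Q (pic Q f n s) y))"
    by (intro indefinite_integral_continuous_1 integrable_continuous_interval)
  then show ?case by (auto simp: pic.simps intro!: continuous_intros)
qed

lemma pic_int: "(\<lambda>s. Q (pic Q f n s) y) integrable_on {0..b}"
  by (intro integrable_continuous_interval contQ pic_cont)

definition Lc :: real where "Lc = real CARD('x) * KQ Q + 1"
definition Cf :: "('x \<Rightarrow> real) \<Rightarrow> real" where "Cf f = (\<Sum>y\<in>UNIV. \<bar>Q f y\<bar>)"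

lemma Lc_pos: "Lc > 0" unfolding Lc_def using KQ_nonneg[OF LQ] by (simp add: add_nonneg_pos)
lemma Cf_nonneg: "Cf f \<ge> 0" unfolding Cf_def by (auto intro: sum_nonneg)

lemma pic_bound:
  assumes "t \<ge> 0"
  shows "(\<Sum>y\<in>UNIV. \<bar>pic Q f (Suc n) t y - pic Q f n t y\<bar>) \<le> Cf f * Lc ^ n * (t ^ Suc n / fact (Suc n))"
  using assms
proof (induction n arbitrary: t)
  case 0
  then show ?case by (simp add: pic.simps Cf_def abs_mult sum_distrib_left[symmetric] mult.commute)
next
  case (Suc n)
  define D where "D s = (\<Sum>y\<in>UNIV. \<bar>pic Q f (Suc n) s y - pic Q f n s y\<bar>)" for s
  have Dc: "continuous_on {0..t} D" unfolding D_def by (auto intro!: continuous_intros pic_cont)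
  have each: "\<bar>pic Q f (Suc (Suc n)) t y - pic Q f (Suc n) t y\<bar>
      \<le> KQ Q * (Cf f * Lc ^ n * (t ^ Suc (Suc n) / fact (Suc (Suc n))))" for y
  proof -
    have "pic Q f (Suc (Suc n)) t y - pic Q f (Suc n) t y
       = integral {0..t} (\<lambda>s. Q (pic Q f (Suc n) s) y - Q (pic Q f n s) y)"
      by (simp add: pic_Suc_app integral_diff pic_int)
    also have "\<bar>\<dots>\<bar> \<le> integral {0..t} (\<lambda>s. KQ Q * D s)"
    proof -
      have i1: "(\<lambda>s. Q (pic Q f (Suc n) s) y - Q (pic Q f n s) y) integrable_on {0..t}"
        by (intro integrable_diff pic_int)
      have i2: "(\<lambda>s. KQ Q * D s) integrable_on {0..t}"
        by (intro integrable_continuous_interval continuous_intros Dc)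
      show ?thesis
        using integral_norm_bound_integral[OF i1 i2] by (simp add: D_def Q_lip[OF LQ])
    qed
    also have "\<dots> \<le> integral {0..t} (\<lambda>s. KQ Q * (Cf f * Lc ^ n * (s ^ Suc n / fact (Suc n))))"
    proof (rule integral_le)
      show "(\<lambda>s. KQ Q * D s) integrable_on {0..t}"
        by (intro integrable_continuous_interval continuous_intros Dc)
      show "(\<lambda>s. KQ Q * (Cf f * Lc ^ n * (s ^ Suc n / fact (Suc n)))) integrable_on {0..t}"
        by (intro integrable_continuous_interval continuous_intros) auto
      fix s assume "s \<in> {0..t}"
      then have "D s \<le> Cf f * Lc ^ n * (s ^ Suc n / fact (Suc n))"
        unfolding D_def by (intro Suc.IH) auto
      then show "KQ Q * D s \<le> KQ Q * (Cf f * Lc ^ n * (s ^ Suc n / fact (Suc n)))"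
        by (rule mult_left_mono) (rule KQ_nonneg[OF LQ])
    qed
    also have "\<dots> = KQ Q * (Cf f * Lc ^ n * (t ^ Suc (Suc n) / fact (Suc (Suc n))))"
    proof -
      have "((\<lambda>s. s ^ Suc n * (KQ Q * Cf f * Lc ^ n / fact (Suc n))) has_integral
          (t ^ Suc (Suc n) / Suc (Suc n)) * (KQ Q * Cf f * Lc ^ n / fact (Suc n))) {0..t}"
        by (rule has_integral_mult_left) (rule int_pow[OF Suc.prems])
      then have "integral {0..t} (\<lambda>s. KQ Q * (Cf f * Lc ^ n * (s ^ Suc n / fact (Suc n))))
         = (t ^ Suc (Suc n) / Suc (Suc n)) * (KQ Q * Cf f * Lc ^ n / fact (Suc n))"
      proof -
        have e: "(\<lambda>s. KQ Q * (Cf f * Lc ^ n * (s ^ Suc n / fact (Suc n)))) =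
                 (\<lambda>s. s ^ Suc n * (KQ Q * Cf f * Lc ^ n / fact (Suc n)))"
          by (rule ext) (simp add: field_simps)
        show ?thesis unfolding e by (rule integral_unique) fact
      qed
      also have "\<dots> = KQ Q * (Cf f * Lc ^ n * (t ^ Suc (Suc n) / fact (Suc (Suc n))))"
        by (simp add: field_simps)
      finally show ?thesis .
    qed
    finally show ?thesis by simp
  qed
  have "(\<Sum>y\<in>UNIV. \<bar>pic Q f (Suc (Suc n)) t y - pic Q f (Suc n) t y\<bar>)
     \<le> (\<Sum>y\<in>(UNIV::'x set). KQ Q * (Cf f * Lc ^ n * (t ^ Suc (Suc n) / fact (Suc (Suc n)))))"
    by (rule sum_mono) (rule each)
  also have "\<dots> = (real CARD('x) * KQ Q) * (Cf f * Lc ^ n * (t ^ Suc (Suc n) / fact (Suc (Suc n))))"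
    by simp
  also have "\<dots> \<le> Lc * (Cf f * Lc ^ n * (t ^ Suc (Suc n) / fact (Suc (Suc n))))"
    by (rule mult_right_mono) (use Suc.prems Cf_nonneg Lc_pos in \<open>auto simp: Lc_def intro!: mult_nonneg_nonneg\<close>)
  finally show ?case by (simp add: ac_simps)
qed

end


definition is_sol :: "(('x \<Rightarrow> real) \<Rightarrow> ('x \<Rightarrow> real)) \<Rightarrow> ('x \<Rightarrow> real) \<Rightarrow> (real \<Rightarrow> 'x \<Rightarrow> real) \<Rightarrow> bool" where
  "is_sol Q f g \<longleftrightarrow> g 0 = f \<and> (\<forall>r<0. g r = f) \<and>
      (\<forall>s\<ge>0. \<forall>x. ((\<lambda>r. g r x) has_real_derivative Q (g s) x) (at s within {0..}))"

context
  fixes Q :: "('x::finite \<Rightarrow> real) \<Rightarrow> ('x \<Rightarrow> real)"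
  assumes LQ: "lower_trans_rate_op Q"
begin

definition gsol :: "('x \<Rightarrow> real) \<Rightarrow> real \<Rightarrow> 'x \<Rightarrow> real" where
  "gsol f t y = f y + suminf (\<lambda>i. pic Q f (Suc i) t y - pic Q f i t y)"

lemma pic_unif:
  assumes "b \<ge> 0"
  shows "uniform_limit {0..b} (\<lambda>n t. pic Q f n t y) (\<lambda>t. gsol f t y) sequentially"
proof -
  define M where "M i = Cf Q f * Lc Q ^ i * (b ^ Suc i / fact (Suc i))" for i
  have "uniform_limit {0..b} (\<lambda>n t. \<Sum>i<n. pic Q f (Suc i) t y - pic Q f i t y)
          (\<lambda>t. suminf (\<lambda>i. pic Q f (Suc i) t y - pic Q f i t y)) sequentially"
  proof (rule Weierstrass_m_test)
    fix n t assume t: "t \<in> {0..b}"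
    have "\<bar>pic Q f (Suc n) t y - pic Q f n t y\<bar> \<le> (\<Sum>y\<in>UNIV. \<bar>pic Q f (Suc n) t y - pic Q f n t y\<bar>)"
      by (rule member_le_sum) auto
    also have "\<dots> \<le> Cf Q f * Lc Q ^ n * (t ^ Suc n / fact (Suc n))"
      by (rule pic_bound[OF LQ]) (use t in auto)
    also have "\<dots> \<le> M n" unfolding M_def
      using t Cf_nonneg[OF LQ] Lc_pos[OF LQ]
      by (intro mult_left_mono divide_right_mono power_mono) auto
    finally show "norm (pic Q f (Suc n) t y - pic Q f n t y) \<le> M n" by simp
  next
    have "summable (\<lambda>i. (Lc Q * b) ^ i /\<^sub>R fact i)"
      using exp_converges sums_summable by blast
    then have "summable (\<lambda>i. (\<lambda>j. (Lc Q * b) ^ j /\<^sub>R fact j) (i + 1))"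
      by (rule summable_ignore_initial_segment)
    then have "summable (\<lambda>i. (Lc Q * b) ^ Suc i /\<^sub>R fact (Suc i))"
      by (simp only: Suc_eq_plus1)
    then have "summable (\<lambda>i. (Cf Q f / Lc Q) * ((Lc Q * b) ^ Suc i /\<^sub>R fact (Suc i)))"
      by (rule summable_mult)
    moreover have "(\<lambda>i. (Cf Q f / Lc Q) * ((Lc Q * b) ^ Suc i /\<^sub>R fact (Suc i))) = M"
      using Lc_pos[OF LQ] by (auto simp: M_def field_simps power_mult_distrib)
    ultimately show "summable M" by simp
  qed
  then have "uniform_limit {0..b} (\<lambda>n t. f y + (\<Sum>i<n. pic Q f (Suc i) t y - pic Q f i t y))
          (\<lambda>t. f y + suminf (\<lambda>i. pic Q f (Suc i) t y - pic Q f i t y)) sequentially"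
    by (intro uniform_limit_add uniform_limit_const)
  moreover have "(\<lambda>n t. f y + (\<Sum>i<n. pic Q f (Suc i) t y - pic Q f i t y)) = (\<lambda>n t. pic Q f n t y)"
    by (auto simp: sum_lessThan_telescope[where f="\<lambda>i. pic Q f i _ y"] pic_0_app)
  ultimately show ?thesis unfolding gsol_def by simp
qed

lemma gsol_cont: "b \<ge> 0 \<Longrightarrow> continuous_on {0..b} (\<lambda>t. gsol f t y)"
  by (rule uniform_limit_theorem[OF _ pic_unif]) (auto intro: always_eventually pic_cont[OF LQ])

lemma Q_unif:
  assumes "b \<ge> 0"
  shows "uniform_limit {0..b} (\<lambda>n s. Q (pic Q f n s) y) (\<lambda>s. Q (gsol f s) y) sequentially"
proof (rule uniform_limitI)
  fix e :: real assume e: "e > 0"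
  define e' where "e' = e / (real CARD('x) * KQ Q + 1)"
  have den: "real CARD('x) * KQ Q + 1 > 0" using KQ_nonneg[OF LQ] by (simp add: add_nonneg_pos)
  have e': "e' > 0" unfolding e'_def using e den by simp
  have "\<forall>\<^sub>F n in sequentially. \<forall>s\<in>{0..b}. dist (pic Q f n s z) (gsol f s z) < e'" for z
    using uniform_limitD[OF pic_unif[OF assms] e'] .
  then have ev: "\<forall>\<^sub>F n in sequentially. \<forall>z. \<forall>s\<in>{0..b}. dist (pic Q f n s z) (gsol f s z) < e'"
    by (rule eventually_all_finite)
  show "\<forall>\<^sub>F n in sequentially. \<forall>s\<in>{0..b}. dist (Q (pic Q f n s) y) (Q (gsol f s) y) < e"
    using ev
  proof eventually_elim
    case (elim n)
    show ?case
    proof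
      fix s assume s: "s \<in> {0..b}"
      have "dist (Q (pic Q f n s) y) (Q (gsol f s) y) \<le> KQ Q * (\<Sum>z\<in>UNIV. \<bar>pic Q f n s z - gsol f s z\<bar>)"
        unfolding dist_real_def by (rule Q_lip[OF LQ])
      also have "\<dots> \<le> KQ Q * (\<Sum>z\<in>(UNIV::'x set). e')"
        using elim s by (intro mult_left_mono sum_mono KQ_nonneg[OF LQ]) (auto simp: dist_real_def less_imp_le)
      also have "\<dots> = (real CARD('x) * KQ Q) * e'" by simp
      also have "\<dots> < (real CARD('x) * KQ Q + 1) * e'" using e' by simp
      also have "\<dots> = e" unfolding e'_def using den by simp
      finally show "dist (Q (pic Q f n s) y) (Q (gsol f s) y) < e" .
    qed
  qed
qed

lemma gsol_int:
  assumes "t \<ge> 0"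
  shows "gsol f t y = f y + integral {0..t} (\<lambda>s. Q (gsol f s) y)"
proof -
  obtain I J where I: "\<And>n. ((\<lambda>s. Q (pic Q f n s) y) has_integral I n) {0..t}"
    and J: "((\<lambda>s. Q (gsol f s) y) has_integral J) {0..t}" and IJ: "I \<longlonglongrightarrow> J"
  proof -
    have cont: "\<And>n. continuous_on {0..t} (\<lambda>s. Q (pic Q f n s) y)"
      by (rule contQ[OF LQ]) (rule pic_cont[OF LQ])
    show ?thesis using uniform_limit_integral[OF Q_unif[OF assms] cont, OF trivial_limit_sequentially] that by blast
  qed
  have "(\<lambda>n. pic Q f (Suc n) t y) = (\<lambda>n. f y + I n)"
    using I by (auto simp: pic_Suc_app integral_unique)
  moreover have "(\<lambda>n. f y + I n) \<longlonglongrightarrow> f y + J" using IJ by (intro tendsto_intros)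
  ultimately have 1: "(\<lambda>n. pic Q f (Suc n) t y) \<longlonglongrightarrow> f y + J" by simp
  have "(\<lambda>n. pic Q f n t y) \<longlonglongrightarrow> gsol f t y"
    using tendsto_uniform_limitI[OF pic_unif[OF assms]] assms by auto
  then have 2: "(\<lambda>n. pic Q f (Suc n) t y) \<longlonglongrightarrow> gsol f t y" by (rule LIMSEQ_Suc)
  have "gsol f t y = f y + J" using LIMSEQ_unique[OF 2 1] .
  then show ?thesis using J by (simp add: integral_unique)
qed

lemma gsol_deriv:
  assumes "t \<ge> 0"
  shows "((\<lambda>r. gsol f r y) has_real_derivative Q (gsol f t) y) (at t within {0..})"
proof -
  have c: "continuous_on {0..t+1} (\<lambda>s. Q (gsol f s) y)"
    by (rule contQ[OF LQ]) (rule gsol_cont, use assms in simp)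
  have "((\<lambda>r. integral {0..r} (\<lambda>s. Q (gsol f s) y)) has_vector_derivative Q (gsol f t) y) (at t within {0..t+1})"
    by (rule integral_has_vector_derivative[OF c]) (use assms in auto)
  then have "((\<lambda>r. f y + integral {0..r} (\<lambda>s. Q (gsol f s) y)) has_real_derivative Q (gsol f t) y) (at t within {0..t+1})"
    by (auto simp: has_real_derivative_iff_has_vector_derivative[symmetric] intro!: derivative_eq_intros)
  then have "((\<lambda>r. gsol f r y) has_real_derivative Q (gsol f t) y) (at t within {0..t+1})"
    by (rule has_field_derivative_transform_within[where d=1]) (use assms gsol_int in auto)
  moreover have "at t within {0..t+1} = at t within {0..}"
    by (rule at_within_nhd[where S="{t-1<..<t+1}"]) auto
  ultimately show ?thesis by simp
qed


lemma sol_exists: "is_sol Q f (\<lambda>r. if r < 0 then f else gsol f r)"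
proof -
  have g0: "gsol f 0 = f" using gsol_int[of 0] by auto
  have "((\<lambda>r. (if r < 0 then f else gsol f r) x) has_real_derivative Q (gsol f s) x) (at s within {0..})"
    if "s \<ge> 0" for s x
    by (rule has_field_derivative_transform_within[OF gsol_deriv[OF that], where d=1]) (use that in auto)
  then show ?thesis unfolding is_sol_def using g0 by auto
qed

lemma sol_unique:
  assumes "is_sol Q f g1" "is_sol Q f g2"
  shows "g1 = g2"
proof (rule ext, rule ext)
  fix t x
  show "g1 t x = g2 t x"
  proof (cases "t < 0")
    case True then show ?thesis using assms unfolding is_sol_def by auto
  next
    case False
    have "g1 t x \<le> g2 t x"
      by (rule comparison[OF LQ, where du="\<lambda>s. Q (g1 s)" and dv="\<lambda>s. Q (g2 s)"])
         (use assms False in \<open>auto simp: is_sol_def\<close>)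
    moreover have "g2 t x \<le> g1 t x"
      by (rule comparison[OF LQ, where du="\<lambda>s. Q (g2 s)" and dv="\<lambda>s. Q (g1 s)"])
         (use assms False in \<open>auto simp: is_sol_def\<close>)
    ultimately show ?thesis by simp
  qed
qed

lemma lower_T_sol:
  assumes "is_sol Q f g"
  shows "lower_T Q t f = g t"
proof -
  have "(THE g. is_sol Q f g) = g"
    by (rule the_equality) (use assms sol_unique in blast)+
  then show ?thesis unfolding lower_T_def is_sol_def[symmetric] by simp
qed

end


context
  fixes Q :: "('x::finite \<Rightarrow> real) \<Rightarrow> ('x \<Rightarrow> real)"
  assumes LQ: "lower_trans_rate_op Q"
begin

lemma T_is_sol: "is_sol Q f (\<lambda>r. lower_T Q r f)"
proof -
  have "(\<lambda>r. lower_T Q r f) = (\<lambda>r. if r < 0 then f else gsol Q f r)"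
    using lower_T_sol[OF LQ sol_exists[OF LQ]] by auto
  then show ?thesis using sol_exists[OF LQ] by simp
qed

lemma T_0: "lower_T Q 0 f = f"
  using T_is_sol unfolding is_sol_def by blast

lemma T_deriv: "t \<ge> 0 \<Longrightarrow> ((\<lambda>r. lower_T Q r f x) has_real_derivative Q (lower_T Q t f) x) (at t within {0..})"
  using T_is_sol unfolding is_sol_def by blast

lemma T_le_super:
  assumes dv: "\<And>t x. t \<ge> 0 \<Longrightarrow> ((\<lambda>r. v r x) has_real_derivative dv t x) (at t within {0..})"
    and supv: "\<And>t x. t \<ge> 0 \<Longrightarrow> dv t x \<ge> Q (v t) x"
    and init: "\<And>x. f x \<le> v 0 x" and t: "t \<ge> 0"
  shows "lower_T Q t f x \<le> v t x"
  by (rule comparison[OF LQ, where du="\<lambda>s. Q (lower_T Q s f)", OF T_deriv dv _ supv])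
     (use init t T_0 in auto)

lemma T_ge_sub:
  assumes du: "\<And>t x. t \<ge> 0 \<Longrightarrow> ((\<lambda>r. u r x) has_real_derivative du t x) (at t within {0..})"
    and subu: "\<And>t x. t \<ge> 0 \<Longrightarrow> du t x \<le> Q (u t) x"
    and init: "\<And>x. u 0 x \<le> f x" and t: "t \<ge> 0"
  shows "u t x \<le> lower_T Q t f x"
  by (rule comparison[OF LQ, where dv="\<lambda>s. Q (lower_T Q s f)", OF du T_deriv subu])
     (use init t T_0 in auto)

lemma T_le_fixed:
  assumes "\<And>x. Q g x \<le> 0" "\<And>x. f x \<le> g x" "t \<ge> 0"
  shows "lower_T Q t f x \<le> g x"
  using T_le_super[where v="\<lambda>_. g" and dv="\<lambda>_ _. 0"] assms by auto

lemma T_ge_fixed: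
  assumes "\<And>x. Q g x \<ge> 0" "\<And>x. g x \<le> f x" "t \<ge> 0"
  shows "g x \<le> lower_T Q t f x"
  using T_ge_sub[where u="\<lambda>_. g" and du="\<lambda>_ _. 0"] assms by auto

lemma T_le_const: "(\<And>y. f y \<le> c) \<Longrightarrow> t \<ge> 0 \<Longrightarrow> lower_T Q t f x \<le> c"
  using T_le_fixed[of "\<lambda>_. c" f t x] Q_const[OF LQ] by auto

lemma T_ge_const: "(\<And>y. c \<le> f y) \<Longrightarrow> t \<ge> 0 \<Longrightarrow> c \<le> lower_T Q t f x"
  using T_ge_fixed[of "\<lambda>_. c" f t x] Q_const[OF LQ] by auto

lemma T_nonexp:
  assumes "\<And>y. a y \<le> b y + d" "t \<ge> 0"
  shows "lower_T Q t a x \<le> lower_T Q t b x + d"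
proof -
  have "lower_T Q t a x \<le> (\<lambda>r y. lower_T Q r b y + d) t x"
  proof (rule T_le_super[where dv="\<lambda>s. Q (lower_T Q s b)"])
    show "((\<lambda>r. lower_T Q r b x + d) has_real_derivative Q (lower_T Q t b) x) (at t within {0..})"
      if "t \<ge> 0" for t x
      using T_deriv[OF that, of b x] by (auto intro!: derivative_eq_intros)
    show "Q (lower_T Q t b) x \<ge> Q ((\<lambda>r y. lower_T Q r b y + d) t) x" for t x
      by (simp add: Q_add_const[OF LQ])
  qed (use assms T_0 in auto)
  then show ?thesis by simp
qed

lemma T_semigroup:
  assumes s: "s \<ge> 0" and t: "t \<ge> 0"
  shows "lower_T Q (s + t) f = lower_T Q t (lower_T Q s f)"
proof (cases "s = 0")
  case True then show ?thesis by (simp add: T_0)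
next
  case False
  with s have spos: "s > 0" by simp
  define g where "g r = (if r < 0 then lower_T Q s f else lower_T Q (s + r) f)" for r
  have "is_sol Q (lower_T Q s f) g"
    unfolding is_sol_def
  proof (intro conjI allI impI)
    show "g 0 = lower_T Q s f" by (simp add: g_def)
    show "g r = lower_T Q s f" if "r < 0" for r using that by (simp add: g_def)
    fix r x :: real assume r: "r \<ge> 0"
    fix x
    have "((\<lambda>r. lower_T Q r f x) has_real_derivative Q (lower_T Q (s + r) f) x) (at (s + r) within {0..})"
      by (rule T_deriv) (use r s in auto)
    moreover have "at (s + r) within {0..} = at (s + r)"
      by (rule at_within_interior) (use r spos in auto)
    ultimately have d1: "((\<lambda>r. lower_T Q r f x) has_real_derivative Q (lower_T Q (s + r) f) x) (at (s + r))"
      by simp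
    have "((\<lambda>r. lower_T Q (s + r) f x) has_real_derivative Q (lower_T Q (s + r) f) x * 1) (at r within {0..})"
      by (rule DERIV_chain2[where g="\<lambda>r. s + r", OF d1]) (auto intro!: derivative_eq_intros)
    then have "((\<lambda>r. lower_T Q (s + r) f x) has_real_derivative Q (g r) x) (at r within {0..})"
      using r by (simp add: g_def)
    then show "((\<lambda>r. g r x) has_real_derivative Q (g r) x) (at r within {0..})"
      by (rule has_field_derivative_transform_within[where d=1]) (use r in \<open>auto simp: g_def\<close>)
  qed
  then have "lower_T Q t (lower_T Q s f) = g t" by (rule lower_T_sol[OF LQ])
  then show ?thesis using t by (simp add: g_def)
qed

end


lemma fun_tendsto_comp:
  fixes F :: "'a \<Rightarrow> 'x \<Rightarrow> real"
  assumes "(F \<longlongrightarrow> l) net"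
  shows "((\<lambda>t. F t x) \<longlongrightarrow> l x) net"
proof -
  show ?thesis
    by (rule continuous_on_tendsto_compose[OF continuous_on_product_coordinates[of x] assms]) auto
qed

lemma ergodicD:
  assumes "ergodic Q"
  obtains c where "\<And>x. ((\<lambda>t. lower_T Q t f x) \<longlongrightarrow> c) at_top"
proof -
  obtain c where "((\<lambda>t. lower_T Q t f) \<longlongrightarrow> (\<lambda>_. c)) at_top"
    using assms unfolding ergodic_def by blast
  then have "\<And>x. ((\<lambda>t. lower_T Q t f x) \<longlongrightarrow> c) at_top"
    using fun_tendsto_comp by fastforce
  then show ?thesis using that by blast
qed

lemma UR_refl: "upper_reachable Q x x"
  unfolding upper_reachable_def by (rule exI[of _ "[x]"]) auto

lemma UR_step:
  assumes "upper_reachable Q x y" "w \<noteq> x" "upper_op Q (indicator {w}) x > 0"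
  shows "upper_reachable Q w y"
proof -
  obtain xs where xs: "xs \<noteq> []" "hd xs = y" "last xs = x"
    "\<forall>k. Suc k < length xs \<longrightarrow> xs ! Suc k \<noteq> xs ! k \<and> upper_op Q (indicator {xs ! Suc k}) (xs ! k) > 0"
    using assms(1) unfolding upper_reachable_def by blast
  have "\<forall>k. Suc k < length (xs @ [w]) \<longrightarrow> (xs @ [w]) ! Suc k \<noteq> (xs @ [w]) ! k \<and>
        upper_op Q (indicator {(xs @ [w]) ! Suc k}) ((xs @ [w]) ! k) > 0"
  proof (intro allI impI)
    fix k assume k: "Suc k < length (xs @ [w])"
    show "(xs @ [w]) ! Suc k \<noteq> (xs @ [w]) ! k \<and>
        upper_op Q (indicator {(xs @ [w]) ! Suc k}) ((xs @ [w]) ! k) > 0"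
    proof (cases "Suc k < length xs")
      case True then show ?thesis using xs(4) by (simp add: nth_append)
    next
      case False
      then have k1: "Suc k = length xs" using k by simp
      then have k2: "k = length xs - 1" by simp
      have "(xs @ [w]) ! Suc k = w" using k1 by (simp add: nth_append)
      moreover have "(xs @ [w]) ! k = x"
        using xs(1,3) k1 k2 by (simp add: nth_append last_conv_nth)
      ultimately show ?thesis using assms by simp
    qed
  qed
  then show ?thesis unfolding upper_reachable_def using xs
    by (intro exI[of _ "xs @ [w]"]) auto
qed

definition ucl :: "(('x \<Rightarrow> real) \<Rightarrow> ('x \<Rightarrow> real)) \<Rightarrow> 'x set \<Rightarrow> bool" where
  "ucl Q C \<longleftrightarrow> (\<forall>x\<in>C. \<forall>w. w \<noteq> x \<longrightarrow> upper_op Q (indicator {w}) x > 0 \<longrightarrow> w \<in> C)"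

lemma ucl_reach:
  assumes "ucl Q C" "y \<in> C" "upper_reachable Q x y"
  shows "x \<in> C"
proof -
  obtain xs where xs: "xs \<noteq> []" "hd xs = y" "last xs = x"
    "\<forall>k. Suc k < length xs \<longrightarrow> xs ! Suc k \<noteq> xs ! k \<and> upper_op Q (indicator {xs ! Suc k}) (xs ! k) > 0"
    using assms(3) unfolding upper_reachable_def by blast
  have "k < length xs \<Longrightarrow> xs ! k \<in> C" for k
  proof (induction k)
    case 0 then show ?case using xs(1,2) assms(2) by (simp add: hd_conv_nth)
  next
    case (Suc k) then show ?case using xs(4) assms(1) unfolding ucl_def by auto
  qed
  from this[of "length xs - 1"] show ?thesis using xs(1,3) by (simp add: last_conv_nth)
qed

lemma ucl_Reach: "ucl Q {x. upper_reachable Q x y}"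
  unfolding ucl_def
  apply (intro ballI allI impI)
  apply simp
  apply (erule UR_step)
  apply assumption+
  done

lemma ucl_X1A: "ucl Q (X1A Q)"
  unfolding ucl_def X1A_def
  apply (intro ballI allI impI)
  apply simp
  apply (intro allI)
  apply (rule UR_step)
  apply (erule spec)
  apply assumption+
  done

context
  fixes Q :: "('x::finite \<Rightarrow> real) \<Rightarrow> ('x \<Rightarrow> real)"
  assumes LQ: "lower_trans_rate_op Q"
begin

lemma Q_neg_le: "Q (\<lambda>y. - h y) x \<le> - Q h x"
  using Q_super[OF LQ, where f=h and g="\<lambda>y. - h y" and x=x] Q_zero[OF LQ] by simp

lemma ind_compl: "(indicator C :: 'x \<Rightarrow> real) = (\<lambda>y. - indicator (UNIV - C) y + 1)"
  by (auto simp: indicator_def)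

lemma Q_ind_compl: "Q (indicator C) x = Q (\<lambda>y. - indicator (UNIV - C) y) x"
proof -
  have "Q (\<lambda>y. - indicator (UNIV - C) y + 1) = Q (\<lambda>y. - indicator (UNIV - C) y)"
    by (rule Q_add_const[OF LQ])
  then show ?thesis by (simp only: ind_compl[symmetric])
qed

lemma Q_compl_ind: "Q (indicator (UNIV - C)) x = Q (\<lambda>y. - indicator C y) x"
proof -
  have e: "(indicator (UNIV - C) :: 'x \<Rightarrow> real) = (\<lambda>y. - indicator C y + 1)"
    by (auto simp: indicator_def)
  have "Q (\<lambda>y. - indicator C y + 1) = Q (\<lambda>y. - indicator C y)"
    by (rule Q_add_const[OF LQ])
  then show ?thesis by (simp only: e)
qed

lemma ucl_Q_nonneg:
  assumes "ucl Q C"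
  shows "Q (indicator C) x \<ge> 0"
proof (cases "x \<in> C")
  case False
  then show ?thesis by (intro Q_pos_at[OF LQ]) auto
next
  case True
  have "Q (indicator C) x = Q (\<lambda>y. - indicator (UNIV - C) y) x"
    by (rule Q_ind_compl)
  also have "(\<lambda>y. - indicator (UNIV - C) y :: real) = (\<lambda>z. \<Sum>w\<in>UNIV - C. - indicator {w} z)"
  proof (rule ext)
    fix z
    have "(\<Sum>w\<in>UNIV - C. - indicator {w} z :: real) = - (\<Sum>w\<in>UNIV - C. if z = w then 1 else 0)"
      by (simp add: sum_negf indicator_def)
    also have "\<dots> = - indicator (UNIV - C) z" by (simp add: sum.delta indicator_def)
    finally show "- indicator (UNIV - C) z = (\<Sum>w\<in>UNIV - C. - indicator {w} z :: real)" by simp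
  qed
  also have "Q \<dots> x \<ge> (\<Sum>w\<in>UNIV - C. Q (\<lambda>z. - indicator {w} z) x)"
    by (rule Q_sum[OF LQ]) simp
  also have "(\<Sum>w\<in>UNIV - C. Q (\<lambda>z. - indicator {w} z) x) \<ge> 0"
  proof (rule sum_nonneg)
    fix w assume w: "w \<in> UNIV - C"
    then have "w \<noteq> x" using True by auto
    then have "\<not> upper_op Q (indicator {w}) x > 0" using assms True w unfolding ucl_def by auto
    then show "Q (\<lambda>z. - indicator {w} z) x \<ge> 0" unfolding upper_op_def by simp
  qed
  finally show ?thesis by simp
qed

lemma ucl_T_one:
  assumes "ucl Q C" "x \<in> C" "t \<ge> 0"
  shows "lower_T Q t (indicator C) x = 1"
proof -
  have "indicator C x \<le> lower_T Q t (indicator C) x"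
    by (rule T_ge_fixed[OF LQ]) (use ucl_Q_nonneg[OF assms(1)] assms in auto)
  moreover have "lower_T Q t (indicator C) x \<le> 1"
    by (rule T_le_const[OF LQ]) (use assms in \<open>auto simp: indicator_def\<close>)
  ultimately show ?thesis using assms by simp
qed

lemma Q_compl_le:
  assumes "\<And>x. Q (indicator C) x \<ge> 0"
  shows "Q (indicator (UNIV - C)) x \<le> 0"
proof -
  have "Q (indicator (UNIV - C)) x = Q (\<lambda>y. - indicator C y) x"
    by (rule Q_compl_ind)
  also have "\<dots> \<le> - Q (indicator C) x" by (rule Q_neg_le)
  finally show ?thesis using assms[of x] by simp
qed

lemma T_mono:
  assumes "\<And>y. a y \<le> b y" "t \<ge> 0"
  shows "lower_T Q t a x \<le> lower_T Q t b x"
  using T_nonexp[OF LQ, of a b 0 t x] assms by simp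

lemma ergodic_X1A_nonempty:
  assumes erg: "ergodic Q"
  shows "X1A Q \<noteq> {}"
proof
  assume empty: "X1A Q = {}"
  define R where "R y = {x. upper_reachable Q x y}" for y
  obtain y1 where y1: "\<And>y. card (R y1) \<le> card (R y)"
    using ex_has_least_nat[where P="\<lambda>_. True" and k=undefined and m="\<lambda>y. card (R y)"] by blast
  have Rsub: "R x \<subseteq> R y" if "x \<in> R y" for x y
  proof
    fix z assume "z \<in> R x"
    then show "z \<in> R y" using ucl_reach[OF ucl_Reach[of Q y]] that unfolding R_def by blast
  qed
  have Req: "R x = R y1" if "x \<in> R y1" for x
  proof -
    have s: "R x \<subseteq> R y1" by (rule Rsub[OF that])
    have "card (R x) \<le> card (R y1)" by (rule card_mono[OF _ s]) simp
    then have "card (R x) = card (R y1)" using y1[of x] by simp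
    then show ?thesis using card_subset_eq[OF _ s] by simp
  qed
  have "y1 \<notin> X1A Q" using empty by simp
  then have "\<not> (\<forall>y. upper_reachable Q y1 y)" unfolding X1A_def by simp
  then obtain y2 where y2: "\<not> upper_reachable Q y1 y2" by blast
  have disj: "R y1 \<inter> R y2 = {}"
  proof (rule ccontr)
    assume "R y1 \<inter> R y2 \<noteq> {}"
    then obtain w where w: "w \<in> R y1" "w \<in> R y2" by blast
    have "y1 \<in> R y1" unfolding R_def by (rule CollectI) (rule UR_refl)
    then have "y1 \<in> R w" using Req[OF w(1)] by simp
    then have "y1 \<in> R y2" using Rsub[OF w(2)] by blast
    then have "upper_reachable Q y1 y2" unfolding R_def by simp
    then show False using y2 by simp
  qed
  define f :: "'x \<Rightarrow> real" where "f = indicator (R y1)"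
  obtain c where c: "\<And>x. ((\<lambda>t. lower_T Q t f x) \<longlongrightarrow> c) at_top"
    using ergodicD[OF erg] by blast
  have "1 \<le> c"
  proof (rule tendsto_lowerbound[OF c[of y1]])
    show "\<forall>\<^sub>F t in at_top. 1 \<le> lower_T Q t f y1"
      using eventually_ge_at_top[of 0]
    proof eventually_elim
      case (elim t)
      have yy: "y1 \<in> R y1" unfolding R_def by (rule CollectI) (rule UR_refl)
      have uc: "ucl Q (R y1)" unfolding R_def by (rule ucl_Reach)
      have "lower_T Q t f y1 = 1" unfolding f_def
        by (rule ucl_T_one[OF uc yy elim])
      then show ?case by simp
    qed
  qed simp
  moreover have "c \<le> 0"
  proof (rule tendsto_upperbound[OF c[of y2]])
    have Qc: "\<And>x. Q (indicator (UNIV - R y2)) x \<le> 0"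
      by (rule Q_compl_le) (rule ucl_Q_nonneg, unfold R_def, rule ucl_Reach)
    show "\<forall>\<^sub>F t in at_top. 0 \<ge> lower_T Q t f y2"
      using eventually_ge_at_top[of 0]
    proof eventually_elim
      case (elim t)
      have "lower_T Q t f y2 \<le> indicator (UNIV - R y2) y2"
        by (rule T_le_fixed[OF LQ Qc]) (use disj elim in \<open>auto simp: f_def indicator_def\<close>)
      moreover have "y2 \<in> R y2" unfolding R_def by (rule CollectI) (rule UR_refl)
      ultimately show ?case by simp
    qed
  qed simp
  ultimately show False by simp
qed

lemma lower_seq_mono: "k \<le> m \<Longrightarrow> lower_seq Q A k \<subseteq> lower_seq Q A m"
  by (induction m) (auto simp: le_Suc_eq)

lemma lower_seq_stab: "\<exists>n. lower_seq Q A n = lower_seq Q A (Suc n)"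
proof (rule ccontr)
  assume "\<not> ?thesis"
  then have ne: "lower_seq Q A n \<subset> lower_seq Q A (Suc n)" for n
    using lower_seq_mono[of n "Suc n" A] by auto
  have "card (lower_seq Q A n) \<ge> n" for n
  proof (induction n)
    case (Suc n)
    have "card (lower_seq Q A n) < card (lower_seq Q A (Suc n))"
      by (rule psubset_card_mono) (use ne in auto)
    then show ?case using Suc by simp
  qed simp
  moreover have "card (lower_seq Q A (Suc CARD('x))) \<le> CARD('x)"
    by (rule card_mono) auto
  ultimately show False using \<open>card (lower_seq Q A (Suc CARD('x))) \<ge> Suc CARD('x)\<close> by simp
qed

lemma ergodic_lower_reach:
  assumes erg: "ergodic Q" and ne: "X1A Q \<noteq> {}"
  shows "lower_reachable Q (X1A Q) x"
proof (rule ccontr)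
  assume nx: "\<not> lower_reachable Q (X1A Q) x"
  define A where "A = X1A Q"
  define n where "n = (LEAST n. lower_seq Q A n = lower_seq Q A (Suc n))"
  define B where "B = lower_seq Q A n"
  have fixB: "lower_seq Q A n = lower_seq Q A (Suc n)"
    unfolding n_def by (rule LeastI_ex) (rule lower_seq_stab)
  have xB: "x \<notin> B" using nx unfolding lower_reachable_def B_def n_def A_def by simp
  have AB: "A \<subseteq> B" unfolding B_def using lower_seq_mono[of 0 n A] by simp
  have QB: "Q (indicator B) y \<le> 0" for y
  proof (cases "y \<in> B")
    case False
    have e: "lower_seq Q A (Suc n) = lower_seq Q A n \<union>
       {y. y \<notin> lower_seq Q A n \<and> Q (indicator (lower_seq Q A n)) y > 0}"
      by (rule lower_seq.simps(2))
    have "B \<union> {y. y \<notin> B \<and> Q (indicator B) y > 0} = B"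
      unfolding B_def using fixB e by metis
    then show ?thesis using False by (metis (mono_tags, lifting) CollectI Un_iff not_less)
  next
    case True
    have "Q (indicator (UNIV - B)) y \<ge> 0" by (rule Q_pos_at[OF LQ]) (use True in auto)
    moreover have "Q (indicator B) y = Q (\<lambda>z. - indicator (UNIV - B) z) y"
      by (rule Q_ind_compl)
    ultimately show ?thesis using Q_neg_le[of "indicator (UNIV - B)" y] by simp
  qed
  obtain z where zA: "z \<in> A" using ne A_def by blast
  obtain c where c: "\<And>x. ((\<lambda>t. lower_T Q t (indicator B) x) \<longlongrightarrow> c) at_top"
    using ergodicD[OF erg] by blast
  have "1 \<le> c"
  proof (rule tendsto_lowerbound[OF c[of z]])
    show "\<forall>\<^sub>F t in at_top. 1 \<le> lower_T Q t (indicator B) z"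
      using eventually_ge_at_top[of 0]
    proof eventually_elim
      case (elim t)
      have "lower_T Q t (indicator A) z = 1"
        using ucl_T_one[OF ucl_X1A zA[unfolded A_def] elim] by (simp add: A_def)
      moreover have "lower_T Q t (indicator A) z \<le> lower_T Q t (indicator B) z"
        by (rule T_mono) (use AB elim in \<open>auto simp: indicator_def\<close>)
      ultimately show ?case by simp
    qed
  qed simp
  moreover have "c \<le> 0"
  proof (rule tendsto_upperbound[OF c[of x]])
    show "\<forall>\<^sub>F t in at_top. 0 \<ge> lower_T Q t (indicator B) x"
      using eventually_ge_at_top[of 0]
    proof eventually_elim
      case (elim t)
      have "lower_T Q t (indicator B) x \<le> indicator B x"
        by (rule T_le_fixed[OF LQ QB]) (use elim in auto)
      then show ?case using xB by simp
    qed
  qed simp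
  ultimately show False by simp
qed

end


lemma fun_tendsto_iff:
  fixes F :: "'a \<Rightarrow> 'x \<Rightarrow> real"
  shows "(F \<longlongrightarrow> l) net \<longleftrightarrow> (\<forall>x. ((\<lambda>t. F t x) \<longlongrightarrow> l x) net)"
proof -
  have "(F \<longlongrightarrow> l) net \<longleftrightarrow> limitin (product_topology (\<lambda>_. euclidean) UNIV) F l net"
    by (simp add: euclidean_product_topology)
  also have "\<dots> \<longleftrightarrow> (\<forall>x. ((\<lambda>t. F t x) \<longlongrightarrow> l x) net)"
    by (subst limitin_componentwise) auto
  finally show ?thesis .
qed

lemma fun_BW:
  fixes a :: "nat \<Rightarrow> 'x::finite \<Rightarrow> real"
  assumes "\<And>n x. lo \<le> a n x" "\<And>n x. a n x \<le> hi"
  obtains g and r :: "nat \<Rightarrow> nat" where "strict_mono r" "(a \<circ> r) \<longlonglongrightarrow> g"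
proof -
  define K where "K = (PiE UNIV (\<lambda>_::'x. {lo..hi}) :: ('x \<Rightarrow> real) set)"
  have "compactin (product_topology (\<lambda>_. euclidean) UNIV) K"
    unfolding K_def by (subst compactin_PiE) auto
  then have "compact K" by (simp add: euclidean_product_topology)
  then have "seq_compact K" by (rule compact_imp_seq_compact)
  moreover have "\<And>n. a n \<in> K" unfolding K_def using assms by auto
  ultimately obtain g r where "strict_mono r" "(a \<circ> r) \<longlonglongrightarrow> g"
    unfolding seq_compact_def by metis
  then show ?thesis using that by blast
qed


definition mx :: "('x::finite \<Rightarrow> real) \<Rightarrow> real" where "mx g = Max (range g)"
definition mn :: "('x::finite \<Rightarrow> real) \<Rightarrow> real" where "mn g = Min (range g)"

lemma mx_ge: "g y \<le> mx g" unfolding mx_def by (rule Max_ge) auto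
lemma mn_le: "mn g \<le> g y" unfolding mn_def by (rule Min_le) auto
lemma mx_attained: "\<exists>x. g x = mx g"
proof -
  have "Max (range g) \<in> range g" by (rule Max_in) auto
  then show ?thesis unfolding mx_def by (metis rangeE)
qed
lemma mn_attained: "\<exists>x. g x = mn g"
proof -
  have "Min (range g) \<in> range g" by (rule Min_in) auto
  then show ?thesis unfolding mn_def by (metis rangeE)
qed
lemma mx_le: "(\<And>y. g y \<le> c) \<Longrightarrow> mx g \<le> c" using mx_attained by metis
lemma mn_ge: "(\<And>y. c \<le> g y) \<Longrightarrow> c \<le> mn g" using mn_attained by metis

context
  fixes Q :: "('x::finite \<Rightarrow> real) \<Rightarrow> ('x \<Rightarrow> real)"
  assumes LQ: "lower_trans_rate_op Q"
begin

lemma deriv_at_1: "((\<lambda>r. lower_T Q r g x) has_real_derivative Q (lower_T Q 1 g) x) (at 1)"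
proof -
  have "((\<lambda>r. lower_T Q r g x) has_real_derivative Q (lower_T Q 1 g) x) (at 1 within {0..})"
    by (rule T_deriv[OF LQ]) simp
  moreover have "at (1::real) within {0..} = at 1" by (rule at_within_interior) auto
  ultimately show ?thesis by simp
qed

lemma max_Q_zero:
  assumes "mx (lower_T Q 1 g) = mx g" "lower_T Q 1 g x = mx g"
  shows "Q (lower_T Q 1 g) x = 0"
proof (rule DERIV_local_max[OF deriv_at_1, of 1])
  show "\<forall>y. \<bar>1 - y\<bar> < 1 \<longrightarrow> lower_T Q y g x \<le> lower_T Q 1 g x"
  proof (intro allI impI)
    fix y :: real assume "\<bar>1 - y\<bar> < 1"
    then have "y \<ge> 0" by simp
    then have "lower_T Q y g x \<le> mx g" by (intro T_le_const[OF LQ] mx_ge)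
    then show "lower_T Q y g x \<le> lower_T Q 1 g x" using assms by simp
  qed
qed simp

lemma min_Q_zero:
  assumes "mn (lower_T Q 1 g) = mn g" "lower_T Q 1 g x = mn g"
  shows "Q (lower_T Q 1 g) x = 0"
proof (rule DERIV_local_min[OF deriv_at_1, of 1])
  show "\<forall>y. \<bar>1 - y\<bar> < 1 \<longrightarrow> lower_T Q 1 g x \<le> lower_T Q y g x"
  proof (intro allI impI)
    fix y :: real assume "\<bar>1 - y\<bar> < 1"
    then have "y \<ge> 0" by simp
    then have "mn g \<le> lower_T Q y g x" by (intro T_ge_const[OF LQ] mn_le)
    then show "lower_T Q 1 g x \<le> lower_T Q y g x" using assms by simp
  qed
qed simp

lemma max_ucl:
  assumes hx: "\<And>y. h y \<le> M" "h x = M" "Q h x = 0"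
    and w: "w \<noteq> x" "upper_op Q (indicator {w}) x > 0"
  shows "h w = M"
proof -
  define k where "k y = M - h y" for y
  have k0: "k y \<ge> 0" for y using hx unfolding k_def by simp
  define r where "r y = k y - k w * indicator {w} y" for y
  have r0: "r y \<ge> 0" for y using k0[of y] unfolding r_def by (auto simp: indicator_def)
  have rx: "r x = 0" using w hx unfolding r_def k_def by (simp add: indicator_def)
  have "Q h x = Q (\<lambda>y. - k y) x"
  proof -
    have "Q (\<lambda>y. - k y + M) = Q (\<lambda>y. - k y)" by (rule Q_add_const[OF LQ])
    moreover have "(\<lambda>y. - k y + M) = h" unfolding k_def by auto
    ultimately show ?thesis by simp
  qed
  moreover have "Q (\<lambda>y. - k y + r y) x \<ge> Q (\<lambda>y. - k y) x + Q r x"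
    by (rule Q_super[OF LQ])
  moreover have "(\<lambda>y. - k y + r y) = (\<lambda>y. k w * (- indicator {w} y))"
    unfolding r_def by auto
  moreover have "Q (\<lambda>y. k w * (- indicator {w} y)) x = k w * Q (\<lambda>y. - indicator {w} y) x"
    by (rule Q_hom[OF LQ]) (rule k0)
  moreover have "Q r x \<ge> 0" by (rule Q_pos_at[OF LQ, where h=r, OF r0 rx])
  ultimately have "0 \<le> k w * Q (\<lambda>y. - indicator {w} y) x" using hx by simp
  moreover have "Q (\<lambda>y. - indicator {w} y) x < 0" using w unfolding upper_op_def by simp
  ultimately have "k w \<le> 0" by (simp add: mult_le_0_iff zero_le_mult_iff)
  then show ?thesis using k0[of w] unfolding k_def by simp
qed

lemma no_stuck:
  assumes ne: "X1A Q \<noteq> {}" and lr: "\<forall>x \<in> UNIV - X1A Q. lower_reachable Q (X1A Q) x"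
    and hM: "mx (lower_T Q 1 g) = mx g" and hm: "mn (lower_T Q 1 g) = mn g"
  shows "mx g = mn g"
proof (rule ccontr)
  assume neq: "mx g \<noteq> mn g"
  define h where "h = lower_T Q 1 g"
  define M where "M = mx g"
  define m where "m = mn g"
  define A where "A = X1A Q"
  have hle: "h y \<le> M" for y using mx_ge[of h y] hM unfolding h_def M_def by simp
  have hge: "m \<le> h y" for y using mn_le[of h y] hm unfolding h_def m_def by simp
  have mM: "m \<noteq> M" using neq unfolding m_def M_def by simp
  have uclU: "ucl Q {x. h x = M}"
    unfolding ucl_def
  proof (intro ballI allI impI)
    fix x w assume x: "x \<in> {x. h x = M}" and w: "w \<noteq> x" "upper_op Q (indicator {w}) x > 0"
    have "Q h x = 0" unfolding h_def by (rule max_Q_zero) (use hM x in \<open>auto simp: h_def M_def\<close>)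
    then have "h w = M" using max_ucl[of h M x w] hle x w by simp
    then show "w \<in> {x. h x = M}" by simp
  qed
  obtain x0 where x0: "h x0 = M" using mx_attained[of h] hM unfolding h_def M_def by metis
  have AU: "z \<in> A \<Longrightarrow> h z = M" for z
  proof -
    assume "z \<in> A"
    then have "upper_reachable Q z x0" unfolding A_def X1A_def by simp
    moreover have "x0 \<in> {x. h x = M}" using x0 by simp
    ultimately have "z \<in> {x. h x = M}" using ucl_reach[OF uclU] by blast
    then show ?thesis by simp
  qed
  have Lz: "h x = m \<Longrightarrow> Q h x = 0" for x
    unfolding h_def by (rule min_Q_zero) (use hm in \<open>auto simp: h_def m_def\<close>)
  have notin: "h x = m \<Longrightarrow> x \<notin> lower_seq Q A k" for k x
  proof (induction k arbitrary: x)
    case 0 then show ?case using AU mM by auto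
  next
    case (Suc k)
    define S where "S = lower_seq Q A k"
    show ?case
    proof
      assume xin: "x \<in> lower_seq Q A (Suc k)"
      have xS: "x \<notin> S" unfolding S_def by (rule Suc.IH) (rule Suc.prems)
      then have Qpos: "Q (indicator S) x > 0" using xin unfolding S_def by simp
      have hpos: "h y - m > 0" if "y \<in> S" for y
      proof -
        have "h y \<noteq> m" using Suc.IH[of y] that unfolding S_def by blast
        then show ?thesis using hge[of y] by simp
      qed
      define \<epsilon> where "\<epsilon> = Min (insert 1 ((\<lambda>y. h y - m) ` S))"
      have epos: "\<epsilon> > 0" unfolding \<epsilon>_def using hpos by (subst Min_gr_iff) auto
      have ele: "\<epsilon> \<le> h y - m" if "y \<in> S" for y
        unfolding \<epsilon>_def by (rule Min_le) (use that in auto)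
      define k' where "k' y = h y - m" for y
      have "Q h x = Q k' x"
      proof -
        have "Q (\<lambda>y. k' y + m) = Q k'" by (rule Q_add_const[OF LQ])
        moreover have "(\<lambda>y. k' y + m) = h" unfolding k'_def by auto
        ultimately show ?thesis by simp
      qed
      moreover have "Q (\<lambda>y. \<epsilon> * indicator S y + (k' y - \<epsilon> * indicator S y)) x \<ge>
          Q (\<lambda>y. \<epsilon> * indicator S y) x + Q (\<lambda>y. k' y - \<epsilon> * indicator S y) x"
        by (rule Q_super[OF LQ])
      moreover have "(\<lambda>y. \<epsilon> * indicator S y + (k' y - \<epsilon> * indicator S y)) = k'" by auto
      moreover have "Q (\<lambda>y. \<epsilon> * indicator S y) x = \<epsilon> * Q (indicator S) x"
        by (rule Q_hom[OF LQ]) (use epos in simp)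
      moreover have "Q (\<lambda>y. k' y - \<epsilon> * indicator S y) x \<ge> 0"
      proof (rule Q_pos_at[OF LQ])
        show "0 \<le> k' y - \<epsilon> * indicator S y" for y
          using ele[of y] hge[of y] unfolding k'_def by (auto simp: indicator_def)
        show "k' x - \<epsilon> * indicator S x = 0" using xS Suc.prems unfolding k'_def by simp
      qed
      moreover have "\<epsilon> * Q (indicator S) x > 0" using epos Qpos by simp
      ultimately have "Q h x > 0" by simp
      then show False using Lz[OF Suc.prems] by simp
    qed
  qed
  define n where "n = (LEAST n. lower_seq Q A n = lower_seq Q A (Suc n))"
  obtain x1 where x1: "h x1 = m" using mn_attained[of h] hm unfolding h_def m_def by metis
  have "x1 \<in> lower_seq Q A n"
  proof (cases "x1 \<in> A")
    case True then show ?thesis using lower_seq_mono[OF LQ, of 0 n A] by auto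
  next
    case False
    then show ?thesis using lr unfolding lower_reachable_def n_def A_def by auto
  qed
  then show False using notin[OF x1] by blast
qed

lemma lip_tendsto:
  fixes \<Phi> :: "('x \<Rightarrow> real) \<Rightarrow> real"
  assumes lip: "\<And>a b d. (\<And>y. \<bar>a y - b y\<bar> \<le> d) \<Longrightarrow> \<bar>\<Phi> a - \<Phi> b\<bar> \<le> d"
    and conv: "\<And>x. (\<lambda>k. F k x) \<longlonglongrightarrow> G x"
  shows "(\<lambda>k. \<Phi> (F k)) \<longlonglongrightarrow> \<Phi> G"
proof (rule tendstoI)
  fix e :: real assume e: "e > 0"
  have "\<forall>\<^sub>F k in sequentially. dist (F k x) (G x) < e / 2" for x
    by (rule tendstoD[OF conv]) (use e in simp)
  then have "\<forall>\<^sub>F k in sequentially. \<forall>x. dist (F k x) (G x) < e / 2"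
    by (rule eventually_all_finite)
  then show "\<forall>\<^sub>F k in sequentially. dist (\<Phi> (F k)) (\<Phi> G) < e"
  proof eventually_elim
    case (elim k)
    have "\<bar>\<Phi> (F k) - \<Phi> G\<bar> \<le> e / 2"
      by (rule lip) (use elim in \<open>auto simp: dist_real_def less_imp_le\<close>)
    then show ?case using e by (simp add: dist_real_def)
  qed
qed

lemma mx_lip: "(\<And>y. \<bar>a y - b y\<bar> \<le> d) \<Longrightarrow> \<bar>mx a - mx b\<bar> \<le> d"
proof -
  assume h: "\<And>y. \<bar>a y - b y\<bar> \<le> d"
  have "mx a \<le> mx b + d"
  proof (rule mx_le)
    fix y show "a y \<le> mx b + d" using h[of y] mx_ge[of b y] by linarith
  qed
  moreover have "mx b \<le> mx a + d"
  proof (rule mx_le)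
    fix y show "b y \<le> mx a + d" using h[of y] mx_ge[of a y] by linarith
  qed
  ultimately show ?thesis by simp
qed

lemma mn_lip: "(\<And>y. \<bar>a y - b y\<bar> \<le> d) \<Longrightarrow> \<bar>mn a - mn b\<bar> \<le> d"
proof -
  assume h: "\<And>y. \<bar>a y - b y\<bar> \<le> d"
  have "mn b - d \<le> mn a"
  proof (rule mn_ge)
    fix y show "mn b - d \<le> a y" using h[of y] mn_le[of b y] by linarith
  qed
  moreover have "mn a - d \<le> mn b"
  proof (rule mn_ge)
    fix y show "mn a - d \<le> b y" using h[of y] mn_le[of a y] by linarith
  qed
  ultimately show ?thesis by simp
qed

end


context
  fixes Q :: "('x::finite \<Rightarrow> real) \<Rightarrow> ('x \<Rightarrow> real)"
  assumes LQ: "lower_trans_rate_op Q"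
begin

lemma T1_lip: "(\<And>y. \<bar>a y - b y\<bar> \<le> d) \<Longrightarrow> \<bar>lower_T Q 1 a x - lower_T Q 1 b x\<bar> \<le> d"
proof -
  assume h: "\<And>y. \<bar>a y - b y\<bar> \<le> d"
  have "lower_T Q 1 a x \<le> lower_T Q 1 b x + d"
  proof (rule T_nonexp[OF LQ])
    fix y show "a y \<le> b y + d" using h[of y] by (simp add: abs_le_iff)
  qed simp
  moreover have "lower_T Q 1 b x \<le> lower_T Q 1 a x + d"
  proof (rule T_nonexp[OF LQ])
    fix y show "b y \<le> a y + d" using h[of y] by (simp add: abs_le_iff)
  qed simp
  ultimately show ?thesis by simp
qed

lemma mxT1_lip: "(\<And>y. \<bar>a y - b y\<bar> \<le> d) \<Longrightarrow> \<bar>mx (lower_T Q 1 a) - mx (lower_T Q 1 b)\<bar> \<le> d"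
  by (rule mx_lip[OF LQ]) (rule T1_lip)

lemma mnT1_lip: "(\<And>y. \<bar>a y - b y\<bar> \<le> d) \<Longrightarrow> \<bar>mn (lower_T Q 1 a) - mn (lower_T Q 1 b)\<bar> \<le> d"
  by (rule mn_lip[OF LQ]) (rule T1_lip)

lemma sufficiency:
  assumes ne: "X1A Q \<noteq> {}" and lr: "\<forall>x \<in> UNIV - X1A Q. lower_reachable Q (X1A Q) x"
  shows "ergodic Q"
  unfolding ergodic_def
proof
  fix f :: "'x \<Rightarrow> real"
  define a where "a k = lower_T Q (real k) f" for k :: nat
  have abnd: "mn f \<le> a k x" "a k x \<le> mx f" for k x
    unfolding a_def by (auto intro!: T_ge_const[OF LQ] T_le_const[OF LQ] mn_le mx_ge)
  have shift: "lower_T Q t f = lower_T Q (t - real k) (a k)" if "t \<ge> real k" for t k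
    using T_semigroup[OF LQ, of "real k" "t - real k" f] that unfolding a_def by simp
  have aSuc: "a (Suc k) = lower_T Q 1 (a k)" for k
    using shift[of k "real (Suc k)"] unfolding a_def by simp
  define Ms where "Ms k = mx (a k)" for k
  define ms where "ms k = mn (a k)" for k
  have "decseq Ms"
  proof (rule decseq_SucI)
    fix k show "Ms (Suc k) \<le> Ms k"
      unfolding Ms_def aSuc by (rule mx_le) (rule T_le_const[OF LQ], rule mx_ge, simp)
  qed
  moreover have "\<forall>i. mn f \<le> Ms i" unfolding Ms_def using abnd mx_ge order_trans by metis
  ultimately obtain LM where LM: "Ms \<longlonglongrightarrow> LM" "\<forall>i. LM \<le> Ms i" by (rule decseq_convergent)
  have "incseq ms"
  proof (rule incseq_SucI)
    fix k show "ms k \<le> ms (Suc k)"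
      unfolding ms_def aSuc by (rule mn_ge) (rule T_ge_const[OF LQ], rule mn_le, simp)
  qed
  moreover have "\<forall>i. ms i \<le> mx f" unfolding ms_def using abnd mn_le order_trans by metis
  ultimately obtain Lm where Lm: "ms \<longlonglongrightarrow> Lm" "\<forall>i. ms i \<le> Lm" by (rule incseq_convergent)
  obtain g and r :: "nat \<Rightarrow> nat" where r: "strict_mono r" and ar: "(a \<circ> r) \<longlonglongrightarrow> g"
    using fun_BW[of "mn f" a "mx f"] abnd by metis
  have arx: "\<And>x. (\<lambda>k. a (r k) x) \<longlonglongrightarrow> g x"
    using ar unfolding fun_tendsto_iff by (simp add: comp_def)
  have "(\<lambda>k. mx (a (r k))) \<longlonglongrightarrow> mx g" by (rule lip_tendsto[OF LQ mx_lip[OF LQ] arx])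
  moreover have "(\<lambda>k. mx (a (r k))) \<longlonglongrightarrow> LM"
    using LIMSEQ_subseq_LIMSEQ[OF LM(1) r] unfolding Ms_def by (simp add: comp_def)
  ultimately have g1: "mx g = LM" by (rule LIMSEQ_unique)
  have "(\<lambda>k. mn (a (r k))) \<longlonglongrightarrow> mn g" by (rule lip_tendsto[OF LQ mn_lip[OF LQ] arx])
  moreover have "(\<lambda>k. mn (a (r k))) \<longlonglongrightarrow> Lm"
    using LIMSEQ_subseq_LIMSEQ[OF Lm(1) r] unfolding ms_def by (simp add: comp_def)
  ultimately have g2: "mn g = Lm" by (rule LIMSEQ_unique)
  have "(\<lambda>k. mx (lower_T Q 1 (a (r k)))) \<longlonglongrightarrow> mx (lower_T Q 1 g)"
    by (rule lip_tendsto[OF LQ mxT1_lip arx])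
  moreover have "(\<lambda>k. mx (lower_T Q 1 (a (r k)))) \<longlonglongrightarrow> LM"
  proof -
    have "(\<lambda>k. Ms (Suc k)) \<longlonglongrightarrow> LM" using LM(1) by (rule LIMSEQ_Suc)
    from LIMSEQ_subseq_LIMSEQ[OF this r] show ?thesis unfolding Ms_def aSuc by (simp add: comp_def)
  qed
  ultimately have g3: "mx (lower_T Q 1 g) = LM" by (rule LIMSEQ_unique)
  have "(\<lambda>k. mn (lower_T Q 1 (a (r k)))) \<longlonglongrightarrow> mn (lower_T Q 1 g)"
    by (rule lip_tendsto[OF LQ mnT1_lip arx])
  moreover have "(\<lambda>k. mn (lower_T Q 1 (a (r k)))) \<longlonglongrightarrow> Lm"
  proof -
    have "(\<lambda>k. ms (Suc k)) \<longlonglongrightarrow> Lm" using Lm(1) by (rule LIMSEQ_Suc)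
    from LIMSEQ_subseq_LIMSEQ[OF this r] show ?thesis unfolding ms_def aSuc by (simp add: comp_def)
  qed
  ultimately have g4: "mn (lower_T Q 1 g) = Lm" by (rule LIMSEQ_unique)
  have "mx g = mn g" by (rule no_stuck[OF LQ ne lr]) (use g1 g2 g3 g4 in auto)
  then have LL: "LM = Lm" using g1 g2 by simp
  show "\<exists>c. ((\<lambda>t. lower_T Q t f) \<longlongrightarrow> (\<lambda>_. c)) at_top"
  proof (intro exI, unfold fun_tendsto_iff, intro allI)
    fix x
    show "((\<lambda>t. lower_T Q t f x) \<longlongrightarrow> LM) at_top"
    proof (rule tendstoI)
      fix e :: real assume e: "e > 0"
      have "\<forall>\<^sub>F k in sequentially. dist (Ms k) LM < e" by (rule tendstoD[OF LM(1) e])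
      moreover have "\<forall>\<^sub>F k in sequentially. dist (ms k) Lm < e" by (rule tendstoD[OF Lm(1) e])
      ultimately have "\<forall>\<^sub>F k in sequentially. dist (Ms k) LM < e \<and> dist (ms k) Lm < e"
        by (rule eventually_conj)
      then obtain K where K: "dist (Ms K) LM < e" "dist (ms K) Lm < e"
        unfolding eventually_sequentially by blast
      show "\<forall>\<^sub>F t in at_top. dist (lower_T Q t f x) LM < e"
        using eventually_ge_at_top[of "real K"]
      proof eventually_elim
        case (elim t)
        have "lower_T Q t f x = lower_T Q (t - real K) (a K) x" using shift[OF elim] by simp
        moreover have "lower_T Q (t - real K) (a K) x \<le> Ms K"
          unfolding Ms_def by (rule T_le_const[OF LQ]) (use elim mx_ge in auto)
        moreover have "ms K \<le> lower_T Q (t - real K) (a K) x"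
          unfolding ms_def by (rule T_ge_const[OF LQ]) (use elim mn_le in auto)
        ultimately show ?case using K LL by (simp add: dist_real_def abs_less_iff)
      qed
    qed
  qed
qed

end

theorem theorem1:
  fixes Q :: "('x::finite \<Rightarrow> real) \<Rightarrow> ('x \<Rightarrow> real)"
  assumes "lower_trans_rate_op Q"
  shows "ergodic Q \<longleftrightarrow>
           (X1A Q \<noteq> {} \<and> (\<forall>x \<in> UNIV - X1A Q. lower_reachable Q (X1A Q) x))"
  using ergodic_X1A_nonempty[OF assms] ergodic_lower_reach[OF assms] sufficiency[OF assms] by blast


end
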